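(* Let $A,B$ be the Dickson matrices of $q$-polynomials $f,g\in\mathbb{F}_{q^n}[x]$ and suppose $A$ and $B$ are diagonally similar. Then there is $\lambda\in\mathbb{F}_{q^n}^*$ with $B=\mathrm{diag}(\lambda,\lambda^q,\dots,\lambda^{q^{n-1}})^{-1}A\,\mathrm{diag}(\lambda,\lambda^q,\dots,\lambda^{q^{n-1}})$, and then $g(x)=\lambda^{-1}f(\lambda x)$. Moreover, if $\mathbb{F}_{q'}$ ($\mathbb{F}_q\subseteq\mathbb{F}_{q'}\subseteq\mathbb{F}_{q^n}$) is the maximum field of linearity of $f$ (equivalently of $g$), then such a $\lambda$ is unique modulo $\mathbb{F}_{q'}^*$.
   Context: A $q$-polynomial is $f(x)=\sum_{j=0}^{n-1}a_jx^{q^j}\in\mathbb{F}_{q^n}[x]$; its Dickson matrix is the $n\times n$ matrix indexed by $\mathbb{Z}_n$ with $A[i|j]=a_{j-i}^{q^i}$. Two $n\times n$ matrices $A,B$ are diagonally similar if $B=D^{-1}AD$ for an invertible diagonal matrix $D$. The maximum field of linearity of $f$ is the largest subfield $\mathbb{F}_{q^e}$ ($e\mid n$) such that $f$ is $\mathbb{F}_{q^e}$-linear. *)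

theory Defs
  imports "HOL-Computational_Algebra.Polynomial" "HOL-Computational_Algebra.Primes" "HOL-Library.Cardinality"
begin

definition qpoly :: "nat \<Rightarrow> nat \<Rightarrow> (nat \<Rightarrow> 'a::comm_ring_1) \<Rightarrow> 'a poly" where
  "qpoly q n a = (\<Sum>j<n. monom (a j) (q ^ j))"

text \<open>Dickson matrix, indexed by Z_n (represented by 0..n-1):
  entry (i,j) is a_{(j-i) mod n} raised to q^i.\<close>
definition dickson :: "nat \<Rightarrow> nat \<Rightarrow> (nat \<Rightarrow> 'a::comm_ring_1) \<Rightarrow> nat \<Rightarrow> nat \<Rightarrow> 'a" where
  "dickson q n a i j = a ((j + n - i) mod n) ^ (q ^ i)"

definition diag_similar :: "nat \<Rightarrow> (nat \<Rightarrow> nat \<Rightarrow> 'a::field) \<Rightarrow> (nat \<Rightarrow> nat \<Rightarrow> 'a) \<Rightarrow> bool" where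
  "diag_similar n A B \<longleftrightarrow> (\<exists>d. (\<forall>i<n. d i \<noteq> 0) \<and>
      (\<forall>i<n. \<forall>j<n. B i j = inverse (d i) * A i j * d j))"

text \<open>The subfield F_{q^e} of the ambient field: fixed points of x to x^(q^e).\<close>
definition subfield_qe :: "nat \<Rightarrow> nat \<Rightarrow> 'a::field set" where
  "subfield_qe q e = {c. c ^ (q ^ e) = c}"

definition lin_over :: "nat \<Rightarrow> nat \<Rightarrow> 'a::field poly \<Rightarrow> bool" where
  "lin_over q e f \<longleftrightarrow> (\<forall>c \<in> subfield_qe q e. \<forall>x y.
      poly f (x + y) = poly f x + poly f y \<and> poly f (c * x) = c * poly f x)"

definition max_field_lin :: "nat \<Rightarrow> nat \<Rightarrow> nat \<Rightarrow> 'a::field poly \<Rightarrow> bool" where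
  "max_field_lin q n e f \<longleftrightarrow> e dvd n \<and> lin_over q e f \<and>
      (\<forall>e'. e' dvd n \<and> lin_over q e' f \<longrightarrow> e' \<le> e)"

end

theory Submission
  imports Defs
begin

lemma fin_field_pow_card:
  fixes x :: "'a::{field,finite}"
  shows "x ^ CARD('a) = x"
proof (cases "x = 0")
  case False
  have "x * (\<Prod>y\<in>UNIV-{0}. x * y) = x * x ^ (CARD('a) - 1) * \<Prod>(UNIV-{0::'a})"
    by (simp add: prod.distrib mult_ac)
  also have "x * x ^ (CARD('a) - 1) = x ^ Suc (CARD('a) - 1)"
    by (subst power_Suc) auto
  also have "Suc (CARD('a) - 1) = CARD('a)"
    using finite_UNIV_card_ge_0[where ?'a = 'a] by simp
  also have "(\<Prod>y\<in>UNIV-{0}. x * y) = (\<Prod>y\<in>UNIV-{0}. y)"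
    by (rule prod.reindex_bij_witness[of _ "\<lambda>y. y / x" "\<lambda>y. x * y"]) (use False in auto)
  finally show ?thesis
    by simp
qed (use finite_UNIV_card_ge_0[where ?'a = 'a] in auto)

lemma fin_field_pow_card_m1:
  fixes x :: "'a::{field,finite}"
  assumes "x \<noteq> 0"
  shows "x ^ (CARD('a) - 1) = 1"
proof -
  have "Suc (CARD('a) - 1) = CARD('a)"
    using finite_UNIV_card_ge_0[where ?'a = 'a] by simp
  hence "x * x ^ (CARD('a) - 1) = x ^ CARD('a)" by (metis power_Suc)
  hence "x * x ^ (CARD('a) - 1) = x * 1" using fin_field_pow_card[of x] by simp
  thus ?thesis using assms by simp
qed

lemma of_nat_card_zero: "of_nat CARD('a) = (0::'a::{ring_1,finite})"
proof -
  have "(\<Sum>y\<in>(UNIV::'a set). 1 + y) = (\<Sum>y\<in>UNIV. y)"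
    by (rule sum.reindex_bij_witness[of _ "\<lambda>y. y - 1" "\<lambda>y. 1 + y"]) auto
  hence "of_nat CARD('a) + (\<Sum>y\<in>(UNIV::'a set). y) = (\<Sum>y\<in>UNIV. y)"
    by (simp add: sum.distrib)
  thus ?thesis by simp
qed

lemma roots_pow_bound:
  fixes c :: "'a::idom"
  assumes "b \<ge> 1"
  shows "card {x. x ^ b = c} \<le> b"
proof -
  let ?p = "monom (1::'a) b - [:c:]"
  have deg: "degree ?p = b" using assms unfolding diff_conv_add_uminus by (subst degree_add_eq_left) (auto simp: degree_monom_eq)
  have nz: "?p \<noteq> 0" using deg assms by auto
  have "{x. x ^ b = c} = {x. poly ?p x = 0}" by (auto simp: poly_monom)
  thus ?thesis using card_poly_roots_bound[OF nz] deg by simp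
qed

lemma roots_pow_x_bound:
  assumes "b \<ge> 2"
  shows "card {x::'a::idom. x ^ b = x} \<le> b"
proof -
  let ?p = "monom (1::'a) b - [:0,1:]"
  have deg: "degree ?p = b" using assms unfolding diff_conv_add_uminus by (subst degree_add_eq_left) (auto simp: degree_monom_eq)
  have nz: "?p \<noteq> 0" using deg assms by auto
  have "{x. x ^ b = x} = {x. poly ?p x = 0}" by (auto simp: poly_monom)
  thus ?thesis using card_poly_roots_bound[OF nz] deg by (simp only:)
qed

lemma pow_image_aux:
  assumes ab: "a * b = CARD('a::{field,finite}) - 1" and a1: "a \<ge> 1" and b1: "b \<ge> 1"
  shows "(\<lambda>x. x ^ a) ` (UNIV - {0::'a}) = {y::'a. y ^ b = 1} \<and> card {y::'a. y ^ b = 1} \<ge> b"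
proof -
  let ?U = "UNIV - {0::'a}"
  let ?I = "(\<lambda>x. x ^ a) ` ?U"
  let ?R = "{y::'a. y ^ b = 1}"
  have sub: "?I \<subseteq> ?R"
  proof
    fix y assume "y \<in> ?I"
    then obtain x where x: "x \<noteq> 0" "y = x ^ a" by auto
    have "y ^ b = x ^ (a * b)" using x by (simp add: power_mult)
    also have "\<dots> = 1" using ab fin_field_pow_card_m1[OF x(1)] by simp
    finally show "y \<in> ?R" by simp
  qed
  have cU: "card ?U = CARD('a) - 1" by (simp add: card_Diff_singleton)
  have "?U \<subseteq> (\<Union>y\<in>?I. {x. x ^ a = y})" by auto
  hence "card ?U \<le> card (\<Union>y\<in>?I. {x::'a. x ^ a = y})" by (intro card_mono) auto
  also have "\<dots> \<le> (\<Sum>y\<in>?I. card {x::'a. x ^ a = y})" by (rule card_UN_le) auto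
  also have "\<dots> \<le> (\<Sum>y\<in>?I. a)" by (intro sum_mono roots_pow_bound a1)
  also have "\<dots> = card ?I * a" by simp
  finally have "a * b \<le> a * card ?I" using cU ab by (simp add: mult.commute)
  hence ge: "b \<le> card ?I" using a1 by simp
  have "card ?R \<le> b" using b1 by (intro roots_pow_bound) auto
  hence "card ?R \<le> card ?I" using ge by simp
  moreover have "card ?I \<le> card ?R" using sub by (intro card_mono) auto
  ultimately have "?I = ?R" using sub by (intro card_subset_eq) auto
  thus ?thesis using ge by simp
qed

lemma gcd_closed:
  fixes K :: "nat set"
  assumes add: "\<And>x y. x \<in> K \<Longrightarrow> y \<in> K \<Longrightarrow> x + y \<in> K"
    and sub: "\<And>x y. x \<in> K \<Longrightarrow> y \<in> K \<Longrightarrow> y \<le> x \<Longrightarrow> x - y \<in> K"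
  shows "m \<in> K \<Longrightarrow> n \<in> K \<Longrightarrow> gcd m n \<in> K"
proof (induction m n rule: gcd_nat_induct)
  case (base m)
  then show ?case by simp
next
  case (step m n)
  have mult: "t * n \<in> K" for t
  proof (induction t)
    case 0
    then show ?case using sub[OF step.prems(2) step.prems(2)] by simp
  next
    case (Suc t)
    then show ?case using add[OF step.prems(2) Suc] by (simp add: add.commute)
  qed
  have "m mod n = m - (m div n) * n" by (simp add: minus_div_mult_eq_mod)
  moreover have "(m div n) * n \<le> m" by simp
  ultimately have "m mod n \<in> K" using sub[OF step.prems(1) mult] by simp
  hence "gcd n (m mod n) \<in> K" using step by simp
  thus ?case by (metis gcd_red_nat)
qed

lemma Gcd_closed:
  fixes K :: "nat set"
  assumes add: "\<And>x y. x \<in> K \<Longrightarrow> y \<in> K \<Longrightarrow> x + y \<in> K"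
    and sub: "\<And>x y. x \<in> K \<Longrightarrow> y \<in> K \<Longrightarrow> y \<le> x \<Longrightarrow> x - y \<in> K"
    and fin: "finite A" and AK: "A \<subseteq> K" and nK: "n \<in> K"
  shows "Gcd (insert n A) \<in> K"
  using fin AK
proof (induction A rule: finite_induct)
  case empty
  then show ?case using nK by simp
next
  case (insert x F)
  have "Gcd (insert n (insert x F)) = gcd x (Gcd (insert n F))"
    by (simp add: insert_commute gcd.left_commute)
  then show ?case using gcd_closed[OF add sub] insert by auto
qed

lemma geom_nat:
  fixes Q :: nat
  assumes "Q \<ge> 1"
  shows "(\<Sum>s<t. Q ^ s) * (Q - 1) = Q ^ t - 1"
proof (induction t)
  case 0
  then show ?case by simp
next
  case (Suc t)
  have h1: "Q ^ t \<ge> 1" using assms by simp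
  have h2: "Q ^ t \<le> Q ^ Suc t" using assms by simp
  have h3: "Q ^ t * (Q - 1) = Q ^ Suc t - Q ^ t" by (simp add: right_diff_distrib' mult.commute)
  have "(\<Sum>s<Suc t. Q ^ s) * (Q - 1) = (Q ^ t - 1) + Q ^ t * (Q - 1)"
    using Suc by (simp add: algebra_simps)
  also have "\<dots> = Q ^ Suc t - 1" using h1 h2 h3 by simp
  finally show ?case .
qed

lemma frob_add:
  fixes x y :: "'a::{field,finite}"
  assumes card: "CARD('a) = q ^ n" and qp: "q = p ^ k" and p: "prime p" and n1: "n \<ge> 1"
  shows "(x + y) ^ (q ^ j) = x ^ (q ^ j) + y ^ (q ^ j)"
proof -
  have cpos: "CHAR('a) > 0" by (rule finite_imp_CHAR_pos) simp
  have cpr: "prime CHAR('a)" by (rule prime_CHAR_semidom[OF cpos])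
  have "CHAR('a) dvd CARD('a)"
    using of_nat_card_zero[where 'a='a] of_nat_eq_0_iff_char_dvd by blast
  hence "CHAR('a) dvd p ^ (k * n)" using card qp by (simp add: power_mult)
  hence "CHAR('a) dvd p" using cpr prime_dvd_power by blast
  hence cp: "CHAR('a) = p" using cpr p primes_dvd_imp_eq by blast
  have "q ^ j = CHAR('a) ^ (k * j)" using cp qp by (simp add: power_mult)
  thus ?thesis using cpr freshmans_dream' by blast
qed

lemma pow_qn_iter:
  fixes x :: "'a::{field,finite}"
  assumes card: "CARD('a) = q ^ n"
  shows "x ^ ((q ^ n) ^ t) = x"
proof (induction t)
  case 0
  then show ?case by simp
next
  case (Suc t)
  have "x ^ ((q ^ n) ^ Suc t) = (x ^ ((q ^ n) ^ t)) ^ (q ^ n)"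
    by (simp only: power_Suc2 power_mult)
  also have "\<dots> = x" using Suc fin_field_pow_card[of x] card by simp
  finally show ?case .
qed

lemma pow_q_mod:
  fixes x :: "'a::{field,finite}"
  assumes card: "CARD('a) = q ^ n"
  shows "x ^ (q ^ i) = x ^ (q ^ (i mod n))"
proof -
  have "q ^ i = q ^ (i mod n) * (q ^ n) ^ (i div n)"
    by (metis mod_div_mult_eq power_add power_mult mult.commute)
  hence "x ^ (q ^ i) = (x ^ (q ^ (i mod n))) ^ ((q ^ n) ^ (i div n))"
    by (simp add: power_mult)
  thus ?thesis using pow_qn_iter[OF card] by simp
qed

lemma poly_qpoly: "poly (qpoly q n a) x = (\<Sum>j<n. a j * x ^ (q ^ j))"
  by (simp add: qpoly_def poly_sum poly_monom)

lemma pcompose_monom_lin: "pcompose (monom (c::'a::comm_ring_1) m) [:0, l:] = monom (c * l ^ m) m"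
proof (induction m arbitrary: c)
  case 0
  then show ?case by (simp add: monom_0 pcompose_const)
next
  case (Suc m)
  have "pcompose (monom c (Suc m)) [:0, l:] = pcompose (pCons 0 (monom c m)) [:0, l:]"
    by (simp add: monom_Suc)
  also have "\<dots> = [:0, l:] * monom (c * l ^ m) m" by (simp add: pcompose_pCons Suc)
  also have "\<dots> = monom (c * l ^ Suc m) (Suc m)"
    by (simp add: monom_Suc smult_monom mult.commute mult.left_commute)
  finally show ?case .
qed

lemma coeff_qsum:
  assumes q2: "q \<ge> (2::nat)" and k: "k < n"
  shows "coeff (\<Sum>j<n. monom (f j) (q ^ j)) (q ^ k) = f k"
proof -
  have "coeff (\<Sum>j<n. monom (f j) (q ^ j)) (q ^ k) = (\<Sum>j<n. if q ^ j = q ^ k then f j else 0)"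
    by (simp add: coeff_sum)
  also have "\<dots> = (\<Sum>j<n. if j = k then f j else 0)"
    using q2 by (intro sum.cong refl) (simp add: power_inject_exp)
  also have "\<dots> = f k" using k by simp
  finally show ?thesis .
qed

lemma degree_qsum:
  assumes q2: "q \<ge> (2::nat)"
  shows "degree (\<Sum>j<n. monom (f j) (q ^ j)) \<le> q ^ (n - 1)"
proof (rule degree_le, intro allI impI)
  fix i assume i: "q ^ (n - 1) < i"
  have "\<forall>j<n. q ^ j \<noteq> i"
  proof (intro allI impI)
    fix j assume "j < n"
    hence "q ^ j \<le> q ^ (n - 1)" using q2 by (intro power_increasing) auto
    thus "q ^ j \<noteq> i" using i by simp
  qed
  thus "coeff (\<Sum>j<n. monom (f j) (q ^ j)) i = 0" by (simp add: coeff_sum)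
qed

lemma qsum_zero:
  fixes f :: "nat \<Rightarrow> 'a::{field,finite}"
  assumes card: "CARD('a) = q ^ n" and q2: "q \<ge> 2" and n1: "n \<ge> 1"
    and z: "\<And>x. (\<Sum>j<n. f j * x ^ (q ^ j)) = 0" and k: "k < n"
  shows "f k = 0"
proof -
  let ?P = "\<Sum>j<n. monom (f j) (q ^ j)"
  have "q ^ (n - 1) < q ^ n" using q2 n1 by (intro power_strict_increasing) auto
  hence dg: "degree ?P < card (UNIV :: 'a set)" using degree_qsum[OF q2, where n=n and f=f] card by simp
  have "?P = 0"
    by (rule poly_eqI_degree[of UNIV]) (use dg z in \<open>auto simp: poly_sum poly_monom\<close>)
  hence "coeff ?P (q ^ k) = 0" by simp
  thus ?thesis using coeff_qsum[OF q2 k, of f] by simp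
qed

lemma idx1: "i < n \<Longrightarrow> k < (n::nat) \<Longrightarrow> ((i + k) mod n + n - i) mod n = k"
proof (cases "i + k < n")
  case True
  assume "i < n" "k < n"
  then show ?thesis using True by simp
next
  case False
  assume a: "i < n" "k < n"
  hence "(i + k) mod n = i + k - n" using False by (simp add: mod_if)
  then show ?thesis using False a by simp
qed
lemma idx2: "i < n \<Longrightarrow> j < (n::nat) \<Longrightarrow> (i + (j + n - i) mod n) mod n = j"
proof (cases "i \<le> j")
  case True
  assume a: "i < n" "j < n"
  hence "(j + n - i) mod n = j - i" using True by (simp add: mod_if)
  then show ?thesis using True a by simp
next
  case False
  assume a: "i < n" "j < n"
  hence "(j + n - i) mod n = j + n - i" using False by (simp add: mod_if)
  then show ?thesis using False a by (simp add: mod_if)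
qed

lemma pow_swap: "((x::'a::monoid_mult) ^ a) ^ b = (x ^ b) ^ a"
  by (metis power_mult mult.commute)

lemma cocycle_add:
  fixes c :: "nat \<Rightarrow> 'a::{field,finite}"
  assumes k1: "\<forall>i. c (i + k1) = c i * c k1 ^ (q ^ i)"
    and k2: "\<forall>i. c (i + k2) = c i * c k2 ^ (q ^ i)"
  shows "\<forall>i. c (i + (k1 + k2)) = c i * c (k1 + k2) ^ (q ^ i)"
proof
  fix i
  have e1: "c (k1 + k2) = c k1 * c k2 ^ (q ^ k1)" using k2 by simp
  have "c (i + (k1 + k2)) = c ((i + k1) + k2)" by (simp add: add.assoc)
  also have "\<dots> = c i * c k1 ^ (q ^ i) * c k2 ^ (q ^ (i + k1))" using k1 k2 by simp
  also have "c k2 ^ (q ^ (i + k1)) = (c k2 ^ (q ^ k1)) ^ (q ^ i)"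
    by (simp add: power_add power_mult mult.commute pow_swap)
  also have "c i * c k1 ^ (q ^ i) * (c k2 ^ (q ^ k1)) ^ (q ^ i) = c i * c (k1 + k2) ^ (q ^ i)"
    by (simp add: e1 power_mult_distrib)
  finally show "c (i + (k1 + k2)) = c i * c (k1 + k2) ^ (q ^ i)" .
qed

lemma cocycle_sub:
  fixes c :: "nat \<Rightarrow> 'a::{field,finite}"
  assumes cnz: "\<And>t. c t \<noteq> 0"
    and k1: "\<forall>i. c (i + k1) = c i * c k1 ^ (q ^ i)"
    and k2: "\<forall>i. c (i + k2) = c i * c k2 ^ (q ^ i)" and le: "k2 \<le> k1"
  shows "\<forall>i. c (i + (k1 - k2)) = c i * c (k1 - k2) ^ (q ^ i)"
proof
  fix i
  define r where "r = k1 - k2"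
  have kr: "k1 = r + k2" using le r_def by simp
  have e1: "c (i + r + k2) = c (i + r) * c k2 ^ (q ^ (i + r))" using k2 by simp
  have e2: "c (i + k1) = c i * c k1 ^ (q ^ i)" using k1 by simp
  have e3: "c k1 = c r * c k2 ^ (q ^ r)" using k2 kr by simp
  have "c (i + r) * c k2 ^ (q ^ (i + r)) = c i * c r ^ (q ^ i) * c k2 ^ (q ^ (i + r))"
  proof -
    have "c (i + r) * c k2 ^ (q ^ (i + r)) = c (i + k1)" using e1 kr by (simp add: add.assoc)
    also have "\<dots> = c i * (c r * c k2 ^ (q ^ r)) ^ (q ^ i)" using e2 e3 by simp
    also have "\<dots> = c i * c r ^ (q ^ i) * c k2 ^ (q ^ (i + r))"
      by (simp add: power_mult_distrib power_add power_mult mult.commute mult.left_commute pow_swap)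
    finally show ?thesis .
  qed
  moreover have "c k2 ^ (q ^ (i + r)) \<noteq> 0" using cnz by simp
  ultimately have "c (i + r) = c i * c r ^ (q ^ i)"
    using mult_right_cancel[of "c k2 ^ (q ^ (i + r))" "c (i + r)" "c i * c r ^ (q ^ i)"] by simp
  thus "c (i + (k1 - k2)) = c i * c (k1 - k2) ^ (q ^ i)" by (simp add: r_def)
qed

lemma exists_lambda:
  fixes a b :: "nat \<Rightarrow> 'a::{field,finite}"
  assumes card: "CARD('a) = q ^ n" and q2: "q \<ge> 2" and n1: "n \<ge> 1"
    and sim: "diag_similar n (dickson q n a) (dickson q n b)"
  shows "\<exists>l::'a. l \<noteq> 0 \<and>
            (\<forall>i<n. \<forall>j<n. dickson q n b i j
               = inverse (l ^ (q ^ i)) * dickson q n a i j * l ^ (q ^ j))"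
proof -
  obtain d where dnz: "\<forall>i<n. d i \<noteq> (0::'a)"
    and deq: "\<forall>i<n. \<forall>j<n. dickson q n b i j = inverse (d i) * dickson q n a i j * d j"
    using sim unfolding diag_similar_def by blast
  have npos: "n > 0" using n1 by simp
  define c where "c t = d (t mod n) / d 0" for t
  have d0: "d 0 \<noteq> 0" using dnz npos by simp
  have cnz: "c t \<noteq> 0" for t using dnz d0 npos by (simp add: c_def)
  have c0: "c 0 = 1" using d0 by (simp add: c_def)
  have cmod: "c t = c (t mod n)" for t by (simp add: c_def)
  have brow: "b k = inverse (d 0) * a k * d k" if "k < n" for k
    using deq[rule_format, of 0 k] that npos by (simp add: dickson_def)
  have R0: "c (i + k) = c i * c k ^ (q ^ i)" if i: "i < n" and k: "k < n" and ak: "a k \<noteq> 0" for i k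
  proof -
    define j where "j = (i + k) mod n"
    have jn: "j < n" using npos by (simp add: j_def)
    have "dickson q n b i j = inverse (d i) * dickson q n a i j * d j" using deq i jn by blast
    hence "b k ^ (q ^ i) = inverse (d i) * a k ^ (q ^ i) * d j"
      using idx1[OF i k] by (simp add: dickson_def j_def)
    hence e: "(inverse (d 0) * a k * d k) ^ (q ^ i) = inverse (d i) * a k ^ (q ^ i) * d j"
      using brow[OF k] by simp
    have akq: "a k ^ (q ^ i) \<noteq> 0" using ak by simp
    have di: "d i \<noteq> 0" using dnz i by simp
    have "inverse (d 0) ^ (q ^ i) * d k ^ (q ^ i) * a k ^ (q ^ i)
        = (inverse (d i) * d j) * a k ^ (q ^ i)"
      using e by (simp add: power_mult_distrib mult_ac)
    hence e2: "inverse (d 0) ^ (q ^ i) * d k ^ (q ^ i) = inverse (d i) * d j"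
      using akq mult_right_cancel by blast
    have dj: "d j = d i * d k ^ (q ^ i) / d 0 ^ (q ^ i)"
      using e2 di d0 by (simp add: field_simps power_inverse)
    have "c (i + k) = d j / d 0" by (simp add: c_def j_def)
    moreover have "c i = d i / d 0" using i by (simp add: c_def)
    moreover have "c k = d k / d 0" using k by (simp add: c_def)
    ultimately show ?thesis unfolding dj using d0
      by (simp add: power_divide)
  qed
  define S where "S = {k. k < n \<and> a k \<noteq> 0}"
  define K where "K = {k. \<forall>i. c (i + k) = c i * c k ^ (q ^ i)}"
  have SK: "S \<subseteq> K"
  proof
    fix k assume "k \<in> S"
    hence k: "k < n" "a k \<noteq> 0" by (auto simp: S_def)
    show "k \<in> K" unfolding K_def
    proof (intro CollectI allI)
      fix i
      have "c (i + k) = c ((i mod n + k) mod n)" using cmod by (metis mod_add_left_eq)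
      also have "\<dots> = c (i mod n + k)" using cmod by metis
      also have "\<dots> = c (i mod n) * c k ^ (q ^ (i mod n))" using R0[OF _ k] npos by simp
      also have "\<dots> = c i * c k ^ (q ^ i)" using cmod pow_q_mod[OF card] by metis
      finally show "c (i + k) = c i * c k ^ (q ^ i)" .
    qed
  qed
  have nK: "n \<in> K" unfolding K_def
  proof (intro CollectI allI)
    fix i
    have "c n = 1" using cmod c0 by (metis mod_self)
    moreover have "c (i + n) = c i" using cmod by (metis mod_add_self2)
    ultimately show "c (i + n) = c i * c n ^ (q ^ i)" by simp
  qed
  have addK: "x + y \<in> K" if "x \<in> K" "y \<in> K" for x y
    using cocycle_add[of c x q y] that by (simp add: K_def)
  have subK: "x - y \<in> K" if "x \<in> K" "y \<in> K" "y \<le> x" for x y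
    using cocycle_sub[of c x q y] that cnz by (simp add: K_def)
  define g where "g = Gcd (insert n S)"
  have finS: "finite S" by (simp add: S_def)
  have gK: "g \<in> K" unfolding g_def by (rule Gcd_closed[OF addK subK finS SK nK])
  have gn: "g dvd n" by (simp add: g_def)
  have gS: "g dvd k" if "k \<in> S" for k using that unfolding g_def by (intro Gcd_dvd) simp
  have gpos: "g > 0" using gn npos by (metis dvd_0_left_iff gr0I)
  obtain m where nm: "n = g * m" using gn by blast
  have grel: "c (i + g) = c i * c g ^ (q ^ i)" for i using gK by (simp add: K_def)
  have iter: "c (t * g) = c g ^ (\<Sum>s<t. (q ^ g) ^ s)" for t
  proof (induction t)
    case 0
    then show ?case using c0 by simp
  next
    case (Suc t)
    have "c (Suc t * g) = c (t * g + g)" by (simp add: add.commute)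
    also have "\<dots> = c (t * g) * c g ^ (q ^ (t * g))" by (rule grel)
    also have "q ^ (t * g) = (q ^ g) ^ t" by (simp add: power_mult mult.commute)
    finally show ?case using Suc by (simp add: power_add)
  qed
  define M where "M = (\<Sum>s<m. (q ^ g) ^ s)"
  have qg1: "q ^ g \<ge> 1" using q2 by simp
  have "q \<le> q ^ g" using q2 gpos by (intro self_le_power) auto
  hence qg2: "q ^ g - 1 \<ge> 1" using q2 by linarith
  have Mg: "M * (q ^ g - 1) = q ^ n - 1" unfolding M_def using geom_nat[OF qg1, of m]
    by (simp add: nm power_mult)
  have ab: "(q ^ g - 1) * M = CARD('a) - 1" using Mg card by (simp add: mult.commute)
  have M1: "M \<ge> 1"
  proof (rule ccontr)
    assume "\<not> M \<ge> 1"
    hence M0: "M = 0" by simp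
    have "q \<le> q ^ n" using q2 n1 by (intro self_le_power) auto
    hence "q ^ n \<ge> 2" using q2 by linarith
    thus False using Mg M0 by simp
  qed
  have "c g ^ M = 1"
  proof -
    have "c g ^ M = c (m * g)" using iter by (simp add: M_def)
    also have "\<dots> = c n" using nm by (simp add: mult.commute)
    also have "\<dots> = 1" using cmod c0 by (metis mod_self)
    finally show ?thesis .
  qed
  then obtain l where lnz: "l \<noteq> 0" and cg: "c g = l ^ (q ^ g - 1)"
    using pow_image_aux[OF ab qg2 M1] by blast
  have citer: "c (t * g) = l ^ (q ^ (t * g) - 1)" for t
  proof (induction t)
    case 0
    then show ?case using c0 by simp
  next
    case (Suc t)
    have A1: "q ^ (t * g) \<ge> 1" using q2 by simp
    have "c (Suc t * g) = c (t * g + g)" by (simp add: add.commute)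
    also have "\<dots> = c (t * g) * c g ^ (q ^ (t * g))" by (rule grel)
    also have "\<dots> = l ^ (q ^ (t * g) - 1) * l ^ ((q ^ g - 1) * q ^ (t * g))"
      using Suc cg by (simp add: power_mult)
    also have "\<dots> = l ^ (q ^ (t * g) - 1 + (q ^ g - 1) * q ^ (t * g))" by (simp add: power_add)
    also have "q ^ (t * g) - 1 + (q ^ g - 1) * q ^ (t * g) = q ^ (Suc t * g) - 1"
    proof -
      have "(q ^ g - 1) * q ^ (t * g) = q ^ g * q ^ (t * g) - q ^ (t * g)"
        by (simp add: diff_mult_distrib)
      moreover have "q ^ g * q ^ (t * g) = q ^ (Suc t * g)" by (simp add: power_add add.commute)
      moreover have "q ^ (t * g) \<le> q ^ g * q ^ (t * g)" using qg1 by simp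
      ultimately show ?thesis using A1 by simp
    qed
    finally show ?case .
  qed
  have cS: "c k = l ^ (q ^ k - 1)" if kS0: "k \<in> S" for k
  proof -
    obtain t where "k = g * t" using gS[OF kS0] by blast
    thus ?thesis using citer[of t] by (simp add: mult.commute)
  qed
  show ?thesis
  proof (intro exI conjI allI impI)
    show "l \<noteq> 0" by fact
    fix i j assume i: "i < n" and j: "j < n"
    define k where "k = (j + n - i) mod n"
    have kn: "k < n" using npos by (simp add: k_def)
    have jk: "(i + k) mod n = j" using idx2[OF i j] by (simp add: k_def)
    have DA: "dickson q n a i j = a k ^ (q ^ i)" by (simp add: dickson_def k_def)
    have DB: "dickson q n b i j = b k ^ (q ^ i)" by (simp add: dickson_def k_def)
    show "dickson q n b i j = inverse (l ^ q ^ i) * dickson q n a i j * l ^ q ^ j"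
    proof (cases "a k = 0")
      case True
      hence "b k = 0" using brow[OF kn] by simp
      thus ?thesis using True DA DB q2 by simp
    next
      case False
      hence kS: "k \<in> S" using kn by (simp add: S_def)
      have di: "d i \<noteq> 0" using dnz i by simp
      have "c (i + k) = c i * c k ^ (q ^ i)" using R0[OF i kn False] .
      moreover have "c (i + k) = d j / d 0" using jk by (simp add: c_def)
      moreover have "c i = d i / d 0" using i by (simp add: c_def)
      ultimately have "d j = d i * (l ^ (q ^ k - 1)) ^ (q ^ i)" using cS[OF kS] d0
        by (simp add: field_simps)
      also have "(l ^ (q ^ k - 1)) ^ (q ^ i) = l ^ (q ^ j) / l ^ (q ^ i)"
      proof -
        have "(l ^ (q ^ k - 1)) ^ (q ^ i) * l ^ (q ^ i) = (l ^ (q ^ k - 1) * l) ^ (q ^ i)"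
          by (simp add: power_mult_distrib)
        also have "l ^ (q ^ k - 1) * l = l ^ (q ^ k)"
        proof -
          have "q ^ k \<ge> 1" using q2 by simp
          hence "q ^ k = Suc (q ^ k - 1)" by simp
          hence "l ^ (q ^ k) = l ^ Suc (q ^ k - 1)" by metis
          thus ?thesis by (simp add: power_Suc2)
        qed
        also have "(l ^ (q ^ k)) ^ (q ^ i) = l ^ (q ^ (i + k))"
          by (simp add: power_mult power_add mult.commute pow_swap)
        also have "\<dots> = l ^ (q ^ j)" using pow_q_mod[OF card, of l "i + k"] jk by simp
        finally show ?thesis using lnz by (simp add: field_simps)
      qed
      finally have "d j = d i * (l ^ (q ^ j) / l ^ (q ^ i))" .
      thus ?thesis using deq i j di by (simp add: field_simps)
    qed
  qed
qed

lemma smult_sum_right: "smult c (\<Sum>i\<in>S. f i) = (\<Sum>i\<in>S. smult c (f i))"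
  by (induction S rule: infinite_finite_induct) (auto simp: smult_add_right)

lemma row0:
  fixes a b :: "nat \<Rightarrow> 'a::field"
  assumes works: "\<forall>i<n. \<forall>j<n. dickson q n b i j
               = inverse (l ^ (q ^ i)) * dickson q n a i j * l ^ (q ^ j)" and j: "j < n"
  shows "b j = inverse l * a j * l ^ (q ^ j)"
  using works[rule_format, of 0 j] j by (simp add: dickson_def)

lemma partB:
  fixes a b :: "nat \<Rightarrow> 'a::field"
  assumes works: "\<forall>i<n. \<forall>j<n. dickson q n b i j
               = inverse (l ^ (q ^ i)) * dickson q n a i j * l ^ (q ^ j)"
  shows "qpoly q n b = smult (inverse l) (pcompose (qpoly q n a) [:0, l:])"
proof -
  have "smult (inverse l) (pcompose (qpoly q n a) [:0, l:])
      = (\<Sum>j<n. monom (inverse l * (a j * l ^ (q ^ j))) (q ^ j))"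
    by (simp add: qpoly_def pcompose_sum smult_sum_right pcompose_monom_lin smult_monom)
  also have "\<dots> = (\<Sum>j<n. monom (b j) (q ^ j))"
    using row0[OF works] by (intro sum.cong refl) (simp add: mult.assoc)
  finally show ?thesis by (simp add: qpoly_def)
qed

lemma lin_transfer:
  fixes F G :: "'a::field poly"
  assumes ev: "\<And>x. poly G x = inverse l * poly F (l * x)" and l: "l \<noteq> 0"
    and lin: "lin_over q e F"
  shows "lin_over q e G"
  unfolding lin_over_def
proof (intro ballI allI conjI)
  fix c x y :: 'a assume c: "c \<in> subfield_qe q e"
  have one: "(1::'a) \<in> subfield_qe q e" by (simp add: subfield_qe_def)
  have addF: "poly F (u + v) = poly F u + poly F v" for u v
    using lin one unfolding lin_over_def by blast
  have "poly G (x + y) = inverse l * poly F (l * x + l * y)" using ev by (simp add: distrib_left)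
  also have "\<dots> = poly G x + poly G y" using addF ev by (simp add: distrib_left)
  finally show "poly G (x + y) = poly G x + poly G y" .
  have "poly G (c * x) = inverse l * poly F (c * (l * x))" using ev by (simp add: mult_ac)
  also have "\<dots> = c * poly G x" using lin c ev unfolding lin_over_def by (simp add: mult_ac)
  finally show "poly G (c * x) = c * poly G x" .
qed

lemma U1:
  fixes a b :: "nat \<Rightarrow> 'a::{field,finite}"
  assumes card: "CARD('a) = q ^ n" and q2: "q \<ge> 2" and n1: "n \<ge> 1"
    and works: "\<forall>i<n. \<forall>j<n. dickson q n b i j
               = inverse (l ^ (q ^ i)) * dickson q n a i j * l ^ (q ^ j)"
    and l: "l \<noteq> 0" and m: "m \<noteq> 0"
  shows "(\<forall>i<n. \<forall>j<n. dickson q n b i j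
               = inverse (m ^ (q ^ i)) * dickson q n a i j * m ^ (q ^ j))
     \<longleftrightarrow> (\<forall>k<n. a k \<noteq> 0 \<longrightarrow> (m / l) ^ (q ^ k) = m / l)"
proof
  assume mw: "\<forall>i<n. \<forall>j<n. dickson q n b i j
               = inverse (m ^ (q ^ i)) * dickson q n a i j * m ^ (q ^ j)"
  show "\<forall>k<n. a k \<noteq> 0 \<longrightarrow> (m / l) ^ (q ^ k) = m / l"
  proof (intro allI impI)
    fix k assume k: "k < n" and ak: "a k \<noteq> 0"
    have "inverse l * a k * l ^ (q ^ k) = inverse m * a k * m ^ (q ^ k)"
      using row0[OF works k] row0[OF mw k] by metis
    hence "a k * (l ^ (q ^ k) * m) = a k * (m ^ (q ^ k) * l)" using l m
      by (simp add: field_simps)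
    hence "l ^ (q ^ k) * m = m ^ (q ^ k) * l" using ak by simp
    thus "(m / l) ^ (q ^ k) = m / l" using l m by (simp add: power_divide field_simps)
  qed
next
  assume nu: "\<forall>k<n. a k \<noteq> 0 \<longrightarrow> (m / l) ^ (q ^ k) = m / l"
  define v where "v = m / l"
  have mv: "m = v * l" using l by (simp add: v_def)
  have vnz: "v \<noteq> 0" using m l by (simp add: v_def)
  show "\<forall>i<n. \<forall>j<n. dickson q n b i j
               = inverse (m ^ (q ^ i)) * dickson q n a i j * m ^ (q ^ j)"
  proof (intro allI impI)
    fix i j assume i: "i < n" and j: "j < n"
    define k where "k = (j + n - i) mod n"
    have kn: "k < n" using n1 by (simp add: k_def)
    have jk: "(i + k) mod n = j" using idx2[OF i j] by (simp add: k_def)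
    have DA: "dickson q n a i j = a k ^ (q ^ i)" by (simp add: dickson_def k_def)
    show "dickson q n b i j = inverse (m ^ (q ^ i)) * dickson q n a i j * m ^ (q ^ j)"
    proof (cases "a k = 0")
      case True
      thus ?thesis using works i j DA q2 by simp
    next
      case False
      have vk: "v ^ (q ^ k) = v" using nu kn False by (simp add: v_def)
      have "v ^ (q ^ j) = v ^ (q ^ (i + k))" using pow_q_mod[OF card, of v "i + k"] jk by simp
      also have "\<dots> = (v ^ (q ^ k)) ^ (q ^ i)" by (simp add: power_add power_mult mult.commute pow_swap)
      also have "\<dots> = v ^ (q ^ i)" using vk by simp
      finally have vij: "v ^ (q ^ j) = v ^ (q ^ i)" .
      have "inverse (m ^ (q ^ i)) * dickson q n a i j * m ^ (q ^ j)
          = inverse (v ^ (q ^ i)) * v ^ (q ^ j) * (inverse (l ^ (q ^ i)) * dickson q n a i j * l ^ (q ^ j))"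
        by (simp add: mv power_mult_distrib mult_ac)
      also have "\<dots> = dickson q n b i j" using vij vnz works i j by simp
      finally show ?thesis by simp
    qed
  qed
qed

lemma V1:
  fixes a :: "nat \<Rightarrow> 'a::{field,finite}" and c :: 'a
  assumes card: "CARD('a) = q ^ n" and q2: "q \<ge> 2" and n1: "n \<ge> 1"
    and lin: "lin_over q e (qpoly q n a)" and c: "c ^ (q ^ e) = c" and k: "k < n" and ak: "a k \<noteq> 0"
  shows "c ^ (q ^ k) = c"
proof -
  have cs: "c \<in> subfield_qe q e" using c by (simp add: subfield_qe_def)
  have "(\<Sum>j<n. a j * (c ^ (q ^ j) - c) * x ^ (q ^ j)) = 0" for x
  proof -
    have "poly (qpoly q n a) (c * x) = c * poly (qpoly q n a) x"
      using lin cs unfolding lin_over_def by blast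
    hence "(\<Sum>j<n. a j * (c * x) ^ (q ^ j)) = c * (\<Sum>j<n. a j * x ^ (q ^ j))"
      by (simp add: poly_qpoly)
    hence "(\<Sum>j<n. a j * (c * x) ^ (q ^ j)) - (\<Sum>j<n. c * (a j * x ^ (q ^ j))) = 0"
      by (simp add: sum_distrib_left)
    hence "(\<Sum>j<n. a j * (c * x) ^ (q ^ j) - c * (a j * x ^ (q ^ j))) = 0"
      by (simp add: sum_subtractf)
    thus ?thesis by (simp add: power_mult_distrib algebra_simps)
  qed
  hence "a k * (c ^ (q ^ k) - c) = 0"
    using qsum_zero[OF card q2 n1, of "\<lambda>j. a j * (c ^ (q ^ j) - c)" k] k by simp
  thus ?thesis using ak by simp
qed

lemma V2:
  fixes c :: "'a::monoid_mult"
  assumes c: "c ^ (q ^ g) = c" and gk: "g dvd k"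
  shows "c ^ (q ^ k) = c"
proof -
  obtain t where kt: "k = g * t" using gk by blast
  have "c ^ (q ^ (g * t)) = c" for t
  proof (induction t)
    case 0
    then show ?case by simp
  next
    case (Suc t)
    have "c ^ (q ^ (g * Suc t)) = (c ^ (q ^ (g * t))) ^ (q ^ g)"
      by (simp add: power_add power_mult mult.commute pow_swap)
    thus ?case using Suc c by simp
  qed
  thus ?thesis using kt by simp
qed

lemma V2lin:
  fixes a :: "nat \<Rightarrow> 'a::{field,finite}"
  assumes card: "CARD('a) = q ^ n" and qp: "q = p ^ k0" and p: "prime p" and n1: "n \<ge> 1"
    and dv: "\<And>k. k < n \<Longrightarrow> a k \<noteq> 0 \<Longrightarrow> g dvd k"
  shows "lin_over q g (qpoly q n a)"
  unfolding lin_over_def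
proof (intro ballI allI conjI)
  fix c x y :: 'a assume cs: "c \<in> subfield_qe q g"
  show "poly (qpoly q n a) (x + y) = poly (qpoly q n a) x + poly (qpoly q n a) y"
    by (simp add: poly_qpoly frob_add[OF card qp p n1] distrib_left sum.distrib)
  have "poly (qpoly q n a) (c * x) = (\<Sum>j<n. c * (a j * x ^ (q ^ j)))"
    unfolding poly_qpoly
  proof (intro sum.cong refl)
    fix j assume "j \<in> {..<n}"
    hence j: "j < n" by simp
    show "a j * (c * x) ^ q ^ j = c * (a j * x ^ q ^ j)"
    proof (cases "a j = 0")
      case True
      then show ?thesis by simp
    next
      case False
      have "c ^ (q ^ j) = c" using V2[of c q g j] cs dv[OF j False] by (simp add: subfield_qe_def)
      thus ?thesis by (simp add: power_mult_distrib mult_ac)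
    qed
  qed
  thus "poly (qpoly q n a) (c * x) = c * poly (qpoly q n a) x"
    by (simp add: poly_qpoly sum_distrib_left)
qed

lemma V3:
  fixes v :: "'a::{field,finite}"
  assumes card: "CARD('a) = q ^ n" and S: "\<And>k. k \<in> S \<Longrightarrow> v ^ (q ^ k) = v" and fin: "finite S"
  shows "v ^ (q ^ Gcd (insert n S)) = v"
proof -
  define K where "K = {k. v ^ (q ^ k) = v}"
  have add: "x + y \<in> K" if "x \<in> K" "y \<in> K" for x y
  proof -
    have "v ^ (q ^ (x + y)) = (v ^ (q ^ x)) ^ (q ^ y)" by (simp add: power_add power_mult)
    thus ?thesis using that by (simp add: K_def)
  qed
  have sub: "x - y \<in> K" if "x \<in> K" "y \<in> K" "y \<le> x" for x y
  proof -
    have "q ^ x = q ^ y * q ^ (x - y)" using that(3) by (simp flip: power_add)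
    hence "v ^ (q ^ x) = (v ^ (q ^ y)) ^ (q ^ (x - y))" by (simp add: power_mult)
    hence "v ^ (q ^ (x - y)) = v" using that(1,2) by (simp add: K_def)
    thus ?thesis by (simp add: K_def)
  qed
  have "n \<in> K" using fin_field_pow_card[of v] card by (simp add: K_def)
  moreover have "S \<subseteq> K" using S by (auto simp: K_def)
  ultimately have "Gcd (insert n S) \<in> K" using Gcd_closed[OF add sub fin] by blast
  thus ?thesis by (simp add: K_def)
qed

lemma card_sub_upper:
  assumes q2: "q \<ge> 2" and g: "g \<ge> 1"
  shows "card (subfield_qe q g :: 'a::{field,finite} set) \<le> q ^ g"
proof -
  have "q \<le> q ^ g" using q2 g by (intro self_le_power) auto
  hence "q ^ g \<ge> 2" using q2 by linarith
  thus ?thesis unfolding subfield_qe_def by (rule roots_pow_x_bound)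
qed

lemma card_sub_lower:
  assumes card: "CARD('a::{field,finite}) = q ^ n" and q2: "q \<ge> 2" and e: "e \<ge> 1"
    and en: "e dvd n" and n1: "n \<ge> 1"
  shows "card (subfield_qe q e :: 'a set) \<ge> q ^ e"
proof -
  obtain m where nm: "n = e * m" using en by blast
  have "q \<le> q ^ e" using q2 e by (intro self_le_power) auto
  hence qe1: "q ^ e - 1 \<ge> 1" using q2 by linarith
  have qe0: "q ^ e \<ge> 1" using q2 by simp
  define M where "M = (\<Sum>s<m. (q ^ e) ^ s)"
  have Mg: "M * (q ^ e - 1) = q ^ n - 1" unfolding M_def using geom_nat[OF qe0, of m]
    by (simp add: nm power_mult)
  have "q \<le> q ^ n" using q2 n1 by (intro self_le_power) auto
  hence "q ^ n \<ge> 2" using q2 by linarith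
  hence M1: "M \<ge> 1" using Mg by (cases M) auto
  have ab: "M * (q ^ e - 1) = CARD('a) - 1" using Mg card by simp
  have R: "card {y::'a. y ^ (q ^ e - 1) = 1} \<ge> q ^ e - 1"
    using pow_image_aux[OF ab M1 qe1] by blast
  have sub: "insert 0 {y::'a. y ^ (q ^ e - 1) = 1} \<subseteq> subfield_qe q e"
  proof
    fix y :: 'a assume "y \<in> insert 0 {y::'a. y ^ (q ^ e - 1) = 1}"
    moreover have "(0::'a) ^ (q ^ e) = 0" using q2 by simp
    moreover have "y ^ (q ^ e) = y" if "y ^ (q ^ e - 1) = 1"
    proof -
      have "q ^ e = Suc (q ^ e - 1)" using qe0 by simp
      hence "y ^ (q ^ e) = y * y ^ (q ^ e - 1)" by (metis power_Suc)
      thus ?thesis using that by simp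
    qed
    ultimately show "y \<in> subfield_qe q e" by (auto simp: subfield_qe_def)
  qed
  have "(0::'a) ^ (q ^ e - 1) = 0" using qe1 by (intro zero_power) simp
  hence "(0::'a) ^ (q ^ e - 1) \<noteq> 1" by (metis zero_neq_one)
  hence "0 \<notin> {y::'a. y ^ (q ^ e - 1) = 1}" by blast
  hence "card (insert 0 {y::'a. y ^ (q ^ e - 1) = 1}) = Suc (card {y::'a. y ^ (q ^ e - 1) = 1})"
    by (intro card_insert_disjoint) auto
  moreover have "card (insert 0 {y::'a. y ^ (q ^ e - 1) = 1}) \<le> card (subfield_qe q e :: 'a set)"
    using sub by (intro card_mono) auto
  ultimately show ?thesis using R qe1 by linarith
qed

lemma U2:
  fixes a :: "nat \<Rightarrow> 'a::{field,finite}" and v :: 'a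
  assumes card: "CARD('a) = q ^ n" and qp: "q = p ^ k0" and p: "prime p" and q2: "q \<ge> 2"
    and n1: "n \<ge> 1" and mf: "max_field_lin q n e (qpoly q n a)"
  shows "(\<forall>k<n. a k \<noteq> 0 \<longrightarrow> v ^ (q ^ k) = v) \<longleftrightarrow> v \<in> subfield_qe q e"
proof -
  define S where "S = {k. k < n \<and> a k \<noteq> 0}"
  define g where "g = Gcd (insert n S)"
  have finS: "finite S" by (simp add: S_def)
  have en: "e dvd n" and line: "lin_over q e (qpoly q n a)"
    and maxe: "\<And>e'. e' dvd n \<Longrightarrow> lin_over q e' (qpoly q n a) \<Longrightarrow> e' \<le> e"
    using mf unfolding max_field_lin_def by blast+
  have gn: "g dvd n" by (simp add: g_def)
  have gpos: "g \<ge> 1" using gn n1 by (cases "g = 0") auto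
  have epos: "e \<ge> 1" using en n1 by (cases "e = 0") auto
  have dv: "g dvd k" if "k < n" "a k \<noteq> 0" for k
    using that unfolding g_def by (intro Gcd_dvd) (simp add: S_def)
  have ling: "lin_over q g (qpoly q n a)" by (rule V2lin[OF card qp p n1 dv])
  have ge: "g \<le> e" using maxe[OF gn ling] .
  have toG: "v' ^ (q ^ g) = v'" if "\<forall>k<n. a k \<noteq> 0 \<longrightarrow> v' ^ (q ^ k) = v'" for v' :: 'a
    unfolding g_def by (rule V3[OF card _ finS]) (use that in \<open>auto simp: S_def\<close>)
  have fromG: "\<forall>k<n. a k \<noteq> 0 \<longrightarrow> v' ^ (q ^ k) = v'" if "v' ^ (q ^ g) = v'" for v' :: 'a
    using V2[OF that] dv by blast
  have subs: "subfield_qe q e \<subseteq> (subfield_qe q g :: 'a set)"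
  proof
    fix c :: 'a assume "c \<in> subfield_qe q e"
    hence "c ^ (q ^ e) = c" by (simp add: subfield_qe_def)
    hence "\<forall>k<n. a k \<noteq> 0 \<longrightarrow> c ^ (q ^ k) = c" using V1[OF card q2 n1 line] by blast
    thus "c \<in> subfield_qe q g" using toG by (simp add: subfield_qe_def)
  qed
  have "q ^ e \<le> card (subfield_qe q e :: 'a set)" by (rule card_sub_lower[OF card q2 epos en n1])
  also have "\<dots> \<le> card (subfield_qe q g :: 'a set)"
    by (rule card_mono[OF finite subs])
  also have "\<dots> \<le> q ^ g" by (rule card_sub_upper[OF q2 gpos])
  finally have qeg: "q ^ e \<le> q ^ g" .
  have q1: "1 < q" using q2 by simp
  have "e \<le> g" by (rule power_le_imp_le_exp[OF q1 qeg])
  hence eg: "e = g" using ge by simp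
  show ?thesis
  proof
    assume "\<forall>k<n. a k \<noteq> 0 \<longrightarrow> v ^ (q ^ k) = v"
    hence "v ^ (q ^ g) = v" by (rule toG)
    thus "v \<in> subfield_qe q e" by (simp add: eg subfield_qe_def)
  next
    assume "v \<in> subfield_qe q e"
    hence "v ^ (q ^ g) = v" by (simp add: eg subfield_qe_def)
    thus "\<forall>k<n. a k \<noteq> 0 \<longrightarrow> v ^ (q ^ k) = v" by (rule fromG)
  qed
qed

theorem mainTheorem9:
  fixes a b :: "nat \<Rightarrow> 'a::{field,finite}" and q n :: nat
  assumes q_pp: "\<exists>p k. prime p \<and> k > 0 \<and> q = p ^ k"
    and n_pos: "n \<ge> 1"
    and card: "CARD('a) = q ^ n"
    and sim: "diag_similar n (dickson q n a) (dickson q n b)"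
  shows "(\<exists>l::'a. l \<noteq> 0 \<and>
            (\<forall>i<n. \<forall>j<n. dickson q n b i j
               = inverse (l ^ (q ^ i)) * dickson q n a i j * l ^ (q ^ j)))
      \<and> (\<forall>l::'a. l \<noteq> 0 \<and>
            (\<forall>i<n. \<forall>j<n. dickson q n b i j
               = inverse (l ^ (q ^ i)) * dickson q n a i j * l ^ (q ^ j))
           \<longrightarrow> qpoly q n b = smult (inverse l) (pcompose (qpoly q n a) [:0, l:]))
      \<and> (\<forall>e. max_field_lin q n e (qpoly q n a) \<longrightarrow>
            max_field_lin q n e (qpoly q n b) \<and>
            (\<forall>l m::'a. l \<noteq> 0 \<and>
               (\<forall>i<n. \<forall>j<n. dickson q n b i j
                  = inverse (l ^ (q ^ i)) * dickson q n a i j * l ^ (q ^ j))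
              \<longrightarrow> (m \<noteq> 0 \<and>
                    (\<forall>i<n. \<forall>j<n. dickson q n b i j
                       = inverse (m ^ (q ^ i)) * dickson q n a i j * m ^ (q ^ j)))
                  \<longleftrightarrow> (m \<noteq> 0 \<and> m / l \<in> subfield_qe q e)))"
proof -
  obtain p k0 where p: "prime p" and k0: "k0 > 0" and qp: "q = p ^ k0" using q_pp by blast
  have p2: "p \<ge> 2" using p by (rule prime_ge_2_nat)
  have "p \<le> p ^ k0" using p2 k0 by (intro self_le_power) auto
  hence q2: "q \<ge> 2" using p2 qp by simp
  obtain l0 :: 'a where l0: "l0 \<noteq> 0" and w0: "\<forall>i<n. \<forall>j<n. dickson q n b i j
               = inverse (l0 ^ (q ^ i)) * dickson q n a i j * l0 ^ (q ^ j)"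
    using exists_lambda[OF card q2 n_pos sim] by blast
  have PB: "\<forall>l::'a. l \<noteq> 0 \<and>
            (\<forall>i<n. \<forall>j<n. dickson q n b i j
               = inverse (l ^ (q ^ i)) * dickson q n a i j * l ^ (q ^ j))
           \<longrightarrow> qpoly q n b = smult (inverse l) (pcompose (qpoly q n a) [:0, l:])"
    using partB by blast
  have ev: "poly (qpoly q n b) x = inverse l0 * poly (qpoly q n a) (l0 * x)" for x
    unfolding partB[OF w0] by (simp add: poly_pcompose mult.commute)
  have ev2: "poly (qpoly q n a) x = inverse (inverse l0) * poly (qpoly q n b) (inverse l0 * x)" for x
    using ev l0 by (simp add: mult.assoc[symmetric])
  have lineq: "lin_over q e (qpoly q n a) \<longleftrightarrow> lin_over q e (qpoly q n b)" for e
    using lin_transfer[OF ev l0] lin_transfer[OF ev2] l0 inverse_nonzero_iff_nonzero by blast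
  show ?thesis
  proof (intro conjI)
    show "\<exists>l::'a. l \<noteq> 0 \<and> (\<forall>i<n. \<forall>j<n. dickson q n b i j
               = inverse (l ^ (q ^ i)) * dickson q n a i j * l ^ (q ^ j))"
      using l0 w0 by blast
    show "\<forall>l::'a. l \<noteq> 0 \<and>
            (\<forall>i<n. \<forall>j<n. dickson q n b i j
               = inverse (l ^ (q ^ i)) * dickson q n a i j * l ^ (q ^ j))
           \<longrightarrow> qpoly q n b = smult (inverse l) (pcompose (qpoly q n a) [:0, l:])" by (rule PB)
    show "\<forall>e. max_field_lin q n e (qpoly q n a) \<longrightarrow>
            max_field_lin q n e (qpoly q n b) \<and>
            (\<forall>l m::'a. l \<noteq> 0 \<and>
               (\<forall>i<n. \<forall>j<n. dickson q n b i j
                  = inverse (l ^ (q ^ i)) * dickson q n a i j * l ^ (q ^ j))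
              \<longrightarrow> (m \<noteq> 0 \<and>
                    (\<forall>i<n. \<forall>j<n. dickson q n b i j
                       = inverse (m ^ (q ^ i)) * dickson q n a i j * m ^ (q ^ j)))
                  \<longleftrightarrow> (m \<noteq> 0 \<and> m / l \<in> subfield_qe q e))"
    proof (intro allI impI conjI)
      fix e assume mf: "max_field_lin q n e (qpoly q n a)"
      show "max_field_lin q n e (qpoly q n b)"
        using mf lineq unfolding max_field_lin_def by blast
      fix l m :: 'a
      assume lw: "l \<noteq> 0 \<and> (\<forall>i<n. \<forall>j<n. dickson q n b i j
                  = inverse (l ^ (q ^ i)) * dickson q n a i j * l ^ (q ^ j))"
      show "(m \<noteq> 0 \<and>
                    (\<forall>i<n. \<forall>j<n. dickson q n b i j
                       = inverse (m ^ (q ^ i)) * dickson q n a i j * m ^ (q ^ j)))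
                  \<longleftrightarrow> (m \<noteq> 0 \<and> m / l \<in> subfield_qe q e)"
      proof (cases "m = 0")
        case True
        then show ?thesis by simp
      next
        case False
        show ?thesis
          using U1[OF card q2 n_pos conjunct2[OF lw] conjunct1[OF lw] False]
            U2[OF card qp p q2 n_pos mf, of "m / l"] False by simp
      qed
    qed
  qed
qed

end
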